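(* Let $u\in\mathcal{F}_\mathrm{e}$ and let $u=u_1+u_2$ with $u_1\in\mathcal{F}^{(s)}_\mathrm{e}$ and $u_2\in\mathcal{G}^{(s)}$. Then $u'=u_2'$ a.e. on $F$.
   Context: Let $m$ be Lebesgue measure. $(\mathcal{E},\mathcal{F})=(\frac12\mathbf{D},H^1(\mathbf{R}))$, $\mathcal{E}(u,v)=\frac12\int u'v'dx$, with extended space $\mathcal{F}_\mathrm{e}=\{u\text{ absolutely continuous},\ u'\in L^2(\mathbf{R})\}$. Let $s$ be strictly increasing, absolutely continuous, with $s'\in\{0,1\}$ a.e. Let $(\mathcal{E}^{(s)},\mathcal{F}^{(s)})$ be given by $\mathcal{F}^{(s)}=\{u\in L^2:u\ll s,\int(du/ds)^2ds<\infty\}$ and $\mathcal{E}^{(s)}(u,v)=\frac12\int\frac{du}{ds}\frac{dv}{ds}ds$, with extended space $\mathcal{F}^{(s)}_\mathrm{e}=\{u\ll s:\int(du/ds)^2ds<\infty,\ u(\infty)=0\text{ if }s(\infty)<\infty,\ u(-\infty)=0\text{ if }s(-\infty)>-\infty\}$. Let $G=\{s'=1\}$, $F=\mathbf{R}\setminus G$, and assume $G$ is open, $m(F)>0$ and $F$ has no isolated points. Define $\mathcal{G}^{(s)}=\{u\in\mathcal{F}_\mathrm{e}:\mathcal{E}(u,v)=0\ \forall v\in\mathcal{F}^{(s)}_\mathrm{e}\}$. *)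

theory Defs
  imports "HOL-Analysis.Analysis"
begin

definition abs_cont_on :: "real \<Rightarrow> real \<Rightarrow> (real \<Rightarrow> real) \<Rightarrow> bool" where
  "abs_cont_on a b u \<longleftrightarrow>
     (\<forall>e>0. \<exists>d>0. \<forall>I :: (real \<times> real) set.
        finite I \<longrightarrow> (\<forall>(x, y)\<in>I. a \<le> x \<and> x \<le> y \<and> y \<le> b) \<longrightarrow>
        disjoint_family_on (\<lambda>(x, y). {x<..<y}) I \<longrightarrow>
        (\<Sum>(x, y)\<in>I. y - x) < d \<longrightarrow> (\<Sum>(x, y)\<in>I. \<bar>u y - u x\<bar>) < e)"

definition abs_cont :: "(real \<Rightarrow> real) \<Rightarrow> bool" where
  "abs_cont u \<longleftrightarrow> (\<forall>a b. a \<le> b \<longrightarrow> abs_cont_on a b u)"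

definition Fe :: "(real \<Rightarrow> real) set" where
  "Fe = {u. abs_cont u \<and> deriv u \<in> borel_measurable lebesgue
              \<and> integrable lebesgue (\<lambda>x. (deriv u x)\<^sup>2)}"

definition E_form :: "(real \<Rightarrow> real) \<Rightarrow> (real \<Rightarrow> real) \<Rightarrow> real" where
  "E_form u v = (1/2) * (\<integral>x. deriv u x * deriv v x \<partial>lebesgue)"

text \<open>u << s with Radon-Nikodym density f = du/ds w.r.t. the Lebesgue-Stieltjes measure ds:
  u(b) - u(a) = \<integral>_(a,b] f ds for all a \<le> b.\<close>
definition ds_density :: "(real \<Rightarrow> real) \<Rightarrow> (real \<Rightarrow> real) \<Rightarrow> (real \<Rightarrow> real) \<Rightarrow> bool" where
  "ds_density s u f \<longleftrightarrow> f \<in> borel_measurable borel \<and>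
     (\<forall>a b. a \<le> b \<longrightarrow> set_integrable (interval_measure s) {a<..b} f \<and>
        u b - u a = (LINT x:{a<..b}|interval_measure s. f x))"

definition Fse :: "(real \<Rightarrow> real) \<Rightarrow> (real \<Rightarrow> real) set" where
  "Fse s = {u. (\<exists>f. ds_density s u f \<and>
                    (\<integral>\<^sup>+x. ennreal ((f x)\<^sup>2) \<partial>interval_measure s) < \<infinity>)
              \<and> (bdd_above (range s) \<longrightarrow> (u \<longlongrightarrow> 0) at_top)
              \<and> (bdd_below (range s) \<longrightarrow> (u \<longlongrightarrow> 0) at_bot)}"

definition Gs :: "(real \<Rightarrow> real) \<Rightarrow> (real \<Rightarrow> real) set" where
  "Gs s = {u \<in> Fe. \<forall>v\<in>Fse s. E_form u v = 0}"

end

theory Submission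
  imports Defs
begin

lemma abs_cont_cont:
  assumes "abs_cont s" shows "isCont s x"
proof -
  have ac: "abs_cont_on (x-1) (x+1) s" using assms unfolding abs_cont_def by simp
  show ?thesis
  unfolding isCont_iff proof (rule LIM_I)
    fix r :: real assume "r > 0"
    then obtain d where d: "d > 0" and H: "\<And>I::(real\<times>real) set. finite I \<Longrightarrow> (\<forall>(p, q)\<in>I. x-1 \<le> p \<and> p \<le> q \<and> q \<le> x+1) \<Longrightarrow>
        disjoint_family_on (\<lambda>(p, q). {p<..<q}) I \<Longrightarrow>
        (\<Sum>(p, q)\<in>I. q - p) < d \<Longrightarrow> (\<Sum>(p, q)\<in>I. \<bar>s q - s p\<bar>) < r"
      using ac unfolding abs_cont_on_def by blast
    show "\<exists>e>0. \<forall>y. y \<noteq> 0 \<and> norm (y - 0) < e \<longrightarrow> norm (s (x + y) - s x) < r"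
    proof (intro exI[of _ "min d 1"] conjI allI impI)
      fix y :: real assume y: "y \<noteq> 0 \<and> norm (y - 0) < min d 1"
      show "norm (s (x + y) - s x) < r"
      proof (cases "y > 0")
        case True
        have "(\<Sum>(p, q)\<in>{(x, x+y)}. \<bar>s q - s p\<bar>) < r"
          by (rule H) (use y True in \<open>auto simp: disjoint_family_on_def\<close>)
        then show ?thesis by simp
      next
        case False
        have "(\<Sum>(p, q)\<in>{(x+y, x)}. \<bar>s q - s p\<bar>) < r"
          by (rule H) (use y False in \<open>auto simp: disjoint_family_on_def\<close>)
        then show ?thesis by (simp add: abs_minus_commute)
      qed
    qed (use d in simp)
  qed
qed

lemma emeasure_countable_Union_finite_bound:
  fixes A :: "'i \<Rightarrow> 'a set"
  assumes C: "countable C" and meas: "\<And>c. c \<in> C \<Longrightarrow> A c \<in> sets M"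
    and fin: "\<And>D. finite D \<Longrightarrow> D \<subseteq> C \<Longrightarrow> emeasure M (\<Union>c\<in>D. A c) \<le> e"
  shows "emeasure M (\<Union>c\<in>C. A c) \<le> e"
proof (cases "C = {}")
  case True
  then show ?thesis using fin[of "{}"] by simp
next
  case False
  define g where "g = from_nat_into C"
  have rg: "range g = C" using C False by (simp add: g_def range_from_nat_into)
  define B where "B n = (\<Union>c\<in>g ` {..<n}. A c)" for n
  have Bs: "range B \<subseteq> sets M"
    using meas rg by (auto simp: B_def intro!: sets.finite_UN)
  have inc: "incseq B"
    by (force simp: incseq_def B_def)
  have U: "(\<Union>n. B n) = (\<Union>c\<in>C. A c)"
    unfolding B_def rg[symmetric] by auto
  have "(SUP n. emeasure M (B n)) \<le> e"
  proof (rule SUP_least)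
    fix n
    have "emeasure M (\<Union>c\<in>g ` {..<n}. A c) \<le> e"
      by (rule fin) (use rg in auto)
    then show "emeasure M (B n) \<le> e" by (simp add: B_def)
  qed
  then show ?thesis using SUP_emeasure_incseq[OF Bs inc] U by simp
qed

lemma component_interval:
  fixes V :: "real set"
  assumes c: "c \<in> components V" and Vab: "V \<subseteq> {a<..<b}" and oV: "open V"
  shows "{Inf c<..<Sup c} \<subseteq> c" "c \<subseteq> {Inf c..Sup c}" "Inf c < Sup c" "a \<le> Inf c" "Sup c \<le> b"
proof -
  have ne: "c \<noteq> {}" using c in_components_nonempty by blast
  have sub: "c \<subseteq> {a<..<b}" using c in_components_subset Vab by blast
  have bb: "bdd_below c" "bdd_above c" using sub by (meson bdd_below_Ioo bdd_below_mono, meson bdd_above_Ioo bdd_above_mono)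
  have conn: "connected c" using c in_components_connected by blast
  then have iv: "is_interval c" by (simp add: is_interval_connected_1)
  have oc: "open c" using c oV open_components by blast
  show "{Inf c<..<Sup c} \<subseteq> c"
  proof
    fix y assume y: "y \<in> {Inf c<..<Sup c}"
    then obtain p where p: "p \<in> c" "p < y" using ne bb by (meson cInf_less_iff greaterThanLessThan_iff)
    obtain q where q: "q \<in> c" "y < q" using y ne bb by (meson less_cSup_iff greaterThanLessThan_iff)
    show "y \<in> c" using iv p q unfolding is_interval_1 by (meson less_imp_le)
  qed
  show "c \<subseteq> {Inf c..Sup c}" using bb by (auto intro: cInf_lower cSup_upper)
  obtain x where x: "x \<in> c" using ne by blast
  then obtain r where r: "r > 0" "ball x r \<subseteq> c" using oc open_contains_ball by blast
  have "x + r/2 \<in> c" using r by (auto simp: dist_real_def intro!: subsetD[OF r(2)])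
  then have "x + r/2 \<le> Sup c" using bb by (simp add: cSup_upper)
  moreover have "Inf c \<le> x" using x bb by (simp add: cInf_lower)
  ultimately show "Inf c < Sup c" using r by linarith
  show "a \<le> Inf c" using ne sub by (force intro: cInf_greatest)
  show "Sup c \<le> b" using ne sub by (force intro: cSup_least)
qed

lemma luzin_open:
  fixes s :: "real \<Rightarrow> real"
  assumes mono: "mono s"
    and H: "\<And>I::(real\<times>real) set. finite I \<Longrightarrow> (\<forall>(x, y)\<in>I. a \<le> x \<and> x \<le> y \<and> y \<le> b) \<Longrightarrow>
        disjoint_family_on (\<lambda>(x, y). {x<..<y}) I \<Longrightarrow>
        (\<Sum>(x, y)\<in>I. y - x) < d \<Longrightarrow> (\<Sum>(x, y)\<in>I. \<bar>s y - s x\<bar>) < e"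
    and oV: "open V" and Vab: "V \<subseteq> {a<..<b}" and mV: "emeasure lborel V < ennreal d"
  shows "emeasure lborel (\<Union>c\<in>components V. {s (Inf c)..s (Sup c)}) \<le> ennreal e"
proof (rule emeasure_countable_Union_finite_bound)
  show "countable (components V)"
    apply (rule countable_disjoint_open_subsets)
     apply (use oV open_components in blast)
    using pairwise_disjoint_components unfolding pairwise_def disjnt_def by blast
  show "{s (Inf c)..s (Sup c)} \<in> sets lborel" for c by simp
  fix D assume D: "finite D" "D \<subseteq> components V"
  note ci = component_interval[OF _ Vab oV]
  have cD: "{Inf c<..<Sup c} \<subseteq> c" "c \<subseteq> {Inf c..Sup c}" "Inf c < Sup c" "a \<le> Inf c" "Sup c \<le> b" "c \<subseteq> V"
    if "c \<in> D" for c
  proof -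
    have c: "c \<in> components V" using that D by blast
    show "{Inf c<..<Sup c} \<subseteq> c" "c \<subseteq> {Inf c..Sup c}" "Inf c < Sup c" "a \<le> Inf c" "Sup c \<le> b"
      using ci[OF c] by auto
    show "c \<subseteq> V" using c in_components_subset by blast
  qed
  define \<phi> where "\<phi> c = (Inf c, Sup c)" for c :: "real set"
  have dis: "c \<inter> c' = {}" if "c \<in> D" "c' \<in> D" "c \<noteq> c'" for c c'
    using pairwise_disjoint_components[of V] D that unfolding pairwise_def by blast
  have inj: "inj_on \<phi> D"
  proof (rule inj_onI)
    fix c c' assume cc: "c \<in> D" "c' \<in> D" "\<phi> c = \<phi> c'"
    show "c = c'"
    proof (rule ccontr)
      assume "c \<noteq> c'"
      then have "c \<inter> c' = {}" using dis cc by blast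
      moreover have "{Inf c<..<Sup c} \<subseteq> c" "{Inf c'<..<Sup c'} \<subseteq> c'" "Inf c < Sup c"
        using ci(1,3) cc(1,2) D(2) by (meson subsetD)+
      moreover have "Inf c = Inf c'" "Sup c = Sup c'" using cc(3) by (auto simp: \<phi>_def)
      ultimately show False
        by (metis disjoint_iff dense greaterThanLessThan_iff subsetD)
    qed
  qed
  have sumeq: "(\<Sum>(x, y)\<in>\<phi> ` D. h x y) = (\<Sum>c\<in>D. h (Inf c) (Sup c))" for h :: "real \<Rightarrow> real \<Rightarrow> real"
    by (subst sum.reindex[OF inj]) (simp add: \<phi>_def)
  have le1: "(\<Sum>c\<in>D. Sup c - Inf c) < d"
  proof -
    have "(\<Sum>c\<in>D. Sup c - Inf c) = (\<Sum>c\<in>D. measure lborel {Inf c<..<Sup c})"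
      using cD(3) by (intro sum.cong refl) (simp add: less_imp_le)
    also have "\<dots> = measure lborel (\<Union>c\<in>D. {Inf c<..<Sup c})"
    proof (rule measure_finite_Union[symmetric])
      show "disjoint_family_on (\<lambda>c. {Inf c<..<Sup c}) D"
        unfolding disjoint_family_on_def
      proof (intro ballI impI)
        fix c c' assume h: "c \<in> D" "c' \<in> D" "c \<noteq> c'"
        then have "c \<inter> c' = {}" by (rule dis)
        then show "{Inf c<..<Sup c} \<inter> {Inf c'<..<Sup c'} = {}" using cD(1)[OF h(1)] cD(1)[OF h(2)] by blast
      qed
    qed (use D in \<open>auto simp: less_imp_le[OF cD(3)]\<close>)
    also have "\<dots> \<le> measure lborel V"
    proof (rule measure_mono_fmeasurable)
      show "(\<Union>c\<in>D. {Inf c<..<Sup c}) \<subseteq> V" using cD(1,6) by blast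
      show "V \<in> fmeasurable lborel" using mV oV by (intro fmeasurableI) (auto simp: borel_open top.not_eq_extremum dest: order.strict_trans[OF _ ennreal_less_top])
    qed (use D in auto)
    also have "\<dots> < d" using mV
      by (metis emeasure_eq_ennreal_measure ennreal_less_iff ennreal_less_top infinity_ennreal_def
          less_le_not_le linorder_le_less_linear measure_nonneg top.not_eq_extremum)
    finally show ?thesis .
  qed
  have le2: "(\<Sum>c\<in>D. s (Sup c) - s (Inf c)) < e"
  proof -
    have "(\<Sum>(x, y)\<in>\<phi> ` D. \<bar>s y - s x\<bar>) < e"
    proof (rule H)
      show "finite (\<phi> ` D)" using D by simp
      show "\<forall>(x, y)\<in>\<phi> ` D. a \<le> x \<and> x \<le> y \<and> y \<le> b"
        using cD(3,4,5) by (auto simp: \<phi>_def less_imp_le)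
      show "disjoint_family_on (\<lambda>(x, y). {x<..<y}) (\<phi> ` D)"
        unfolding disjoint_family_on_def
      proof (intro ballI impI)
        fix p q assume pq: "p \<in> \<phi> ` D" "q \<in> \<phi> ` D" "p \<noteq> q"
        then obtain c c' where cc: "c \<in> D" "c' \<in> D" "p = \<phi> c" "q = \<phi> c'" by blast
        then have "c \<noteq> c'" using pq by auto
        then have "{Inf c<..<Sup c} \<inter> {Inf c'<..<Sup c'} = {}"
          using dis[of c c'] cD(1)[of c] cD(1)[of c'] cc by blast
        then show "(case p of (x, y) \<Rightarrow> {x<..<y}) \<inter> (case q of (x, y) \<Rightarrow> {x<..<y}) = {}"
          using cc by (simp add: \<phi>_def)
      qed
      show "(\<Sum>(x, y)\<in>\<phi> ` D. y - x) < d" using le1 sumeq[of "\<lambda>x y. y - x"] by simp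
    qed
    moreover have "(\<Sum>(x, y)\<in>\<phi> ` D. \<bar>s y - s x\<bar>) = (\<Sum>c\<in>D. s (Sup c) - s (Inf c))"
      unfolding sumeq[of "\<lambda>x y. \<bar>s y - s x\<bar>"] using cD(3) mono
      by (intro sum.cong refl) (auto simp: mono_def less_imp_le)
    ultimately show ?thesis by simp
  qed
  have "emeasure lborel (\<Union>c\<in>D. {s (Inf c)..s (Sup c)}) \<le> (\<Sum>c\<in>D. emeasure lborel {s (Inf c)..s (Sup c)})"
    by (rule emeasure_subadditive_finite) (use D in auto)
  also have "\<dots> = (\<Sum>c\<in>D. ennreal (s (Sup c) - s (Inf c)))"
    using cD(3) mono by (intro sum.cong refl) (auto simp: mono_def less_imp_le)
  also have "\<dots> = ennreal (\<Sum>c\<in>D. s (Sup c) - s (Inf c))"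
    using cD(3) mono by (intro sum_ennreal) (auto simp: mono_def less_imp_le)
  also have "\<dots> \<le> ennreal e" using le2 by (simp add: ennreal_leI)
  finally show "emeasure lborel (\<Union>c\<in>D. {s (Inf c)..s (Sup c)}) \<le> ennreal e" .
qed

lemma luzin_bounded:
  fixes s :: "real \<Rightarrow> real"
  assumes ac: "abs_cont s" and mono: "mono s" and N: "negligible N" and NW: "N \<subseteq> {a<..<b}" and ab: "a \<le> b"
  shows "negligible (s ` N)"
  unfolding negligible_outer_le
proof (intro allI impI)
  fix e :: real assume e: "e > 0"
  obtain d where d: "d > 0" and H: "\<And>I::(real\<times>real) set. finite I \<Longrightarrow> (\<forall>(x, y)\<in>I. a \<le> x \<and> x \<le> y \<and> y \<le> b) \<Longrightarrow>
        disjoint_family_on (\<lambda>(x, y). {x<..<y}) I \<Longrightarrow>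
        (\<Sum>(x, y)\<in>I. y - x) < d \<Longrightarrow> (\<Sum>(x, y)\<in>I. \<bar>s y - s x\<bar>) < e"
    using ac ab e unfolding abs_cont_def abs_cont_on_def by meson
  have Nl: "N \<in> sets lebesgue" using N negligible_imp_sets by blast
  obtain T0 where T0: "open T0" "N \<subseteq> T0" "(T0 - N) \<in> lmeasurable" "emeasure lebesgue (T0 - N) < ennreal d"
    using sets_lebesgue_outer_open[OF Nl d] by blast
  define V where "V = T0 \<inter> {a<..<b}"
  have oV: "open V" and Vab: "V \<subseteq> {a<..<b}" and NV: "N \<subseteq> V" using T0 NW by (auto simp: V_def)
  have N0: "emeasure lebesgue N = 0" using N negligible_iff_null_sets by blast
  have "emeasure lborel V = emeasure lebesgue V"
    using oV by (simp add: borel_open)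
  also have "\<dots> \<le> emeasure lebesgue ((T0 - N) \<union> N)"
    by (rule emeasure_mono) (use T0 Nl in \<open>auto simp: V_def\<close>)
  also have "\<dots> \<le> emeasure lebesgue (T0 - N) + emeasure lebesgue N"
    by (rule emeasure_subadditive) (use T0 Nl in auto)
  also have "\<dots> < ennreal d" using T0(4) N0 by simp
  finally have mV: "emeasure lborel V < ennreal d" .
  define T where "T = (\<Union>c\<in>components V. {s (Inf c)..s (Sup c)})"
  have cnt: "countable (components V)"
    apply (rule countable_disjoint_open_subsets)
     apply (use oV open_components in blast)
    using pairwise_disjoint_components unfolding pairwise_def disjnt_def by blast
  have Tb: "T \<in> sets borel" unfolding T_def using cnt by (intro sets.countable_UN'') auto
  have Te: "emeasure lborel T \<le> ennreal e" unfolding T_def by (rule luzin_open[OF mono H oV Vab mV])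
  have sub: "s ` N \<subseteq> T"
  proof
    fix y assume "y \<in> s ` N"
    then obtain x where x: "x \<in> N" "y = s x" by blast
    then have xV: "x \<in> V" using NV by blast
    then obtain c where c: "c \<in> components V" "x \<in> c" using Union_components[of V] by blast
    have "x \<in> {Inf c..Sup c}" using component_interval(2)[OF c(1) Vab oV] c(2) by blast
    then have "s x \<in> {s (Inf c)..s (Sup c)}" using mono by (auto simp: mono_def)
    then show "y \<in> T" using c x unfolding T_def by blast
  qed
  have Tf: "T \<in> fmeasurable lborel"
    using Te Tb by (intro fmeasurableI) (auto simp: top.not_eq_extremum dest: order.strict_trans1[OF _ ennreal_less_top])
  show "\<exists>T. s ` N \<subseteq> T \<and> T \<in> lmeasurable \<and> measure lebesgue T \<le> e"
  proof (intro exI conjI)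
    show "s ` N \<subseteq> T" by (rule sub)
    show "T \<in> lmeasurable" using Tf Tb
      by (auto simp: fmeasurable_def)
    show "measure lebesgue T \<le> e" using Te Tb Tf e
      by (simp add: measure_def enn2real_leI)
  qed
qed

lemma luzin_N:
  fixes s :: "real \<Rightarrow> real"
  assumes ac: "abs_cont s" and mono: "mono s" and N: "negligible N"
  shows "negligible (s ` N)"
proof -
  define W where "W n = N \<inter> {- real n <..< real n}" for n
  have "negligible (s ` W n)" for n
    by (rule luzin_bounded[OF ac mono _ _, of _ "- real n" "real n"])
       (use N in \<open>auto simp: W_def intro: negligible_subset\<close>)
  moreover have "s ` N = \<Union>(range (\<lambda>n. s ` W n))"
  proof -
    have "N = (\<Union>n. W n)"
    proof (auto simp: W_def)
      fix x assume "x \<in> N"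
      obtain n where "\<bar>x\<bar> < real n" using reals_Archimedean2 by blast
      then show "\<exists>n. - real n < x \<and> x < real n" by (intro exI[of _ n]) (simp add: abs_less_iff)
    qed
    then show ?thesis by auto
  qed
  ultimately show ?thesis by (auto intro!: negligible_countable_Union)
qed

lemma image_Ioc_cont:
  fixes s :: "real \<Rightarrow> real"
  assumes sm: "strict_mono s" and c: "\<And>x. isCont s x" and ab: "a \<le> b"
  shows "s ` {a<..b} = {s a<..s b}"
proof
  show "s ` {a<..b} \<subseteq> {s a<..s b}" using sm by (auto simp: strict_mono_less strict_mono_less_eq)
  show "{s a<..s b} \<subseteq> s ` {a<..b}"
  proof
    fix y assume y: "y \<in> {s a<..s b}"
    obtain x where x: "a \<le> x" "x \<le> b" "s x = y"
      using IVT'[of s a y b] y ab c by (auto intro!: continuous_at_imp_continuous_on)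
    have "x \<noteq> a" using x y by auto
    then show "y \<in> s ` {a<..b}" using x by auto
  qed
qed

lemma s_increment:
  fixes s :: "real \<Rightarrow> real" and G :: "real set"
  assumes ac: "abs_cont s" and sm: "strict_mono s"
    and N1: "N1 \<in> null_sets lebesgue"
    and dz: "\<And>x. x \<notin> N1 \<Longrightarrow> (s has_real_derivative 0) (at x) \<or> (s has_real_derivative 1) (at x)"
    and G_def: "G = {x. (s has_real_derivative 1) (at x)}"
    and Gl: "G \<in> sets lebesgue"
    and ab: "a \<le> b"
  shows "s b - s a = measure lebesgue (G \<inter> {a<..b})"
proof -
  have mono: "mono s" using sm by (simp add: strict_mono_mono)
  have c: "\<And>x. isCont s x" using ac abs_cont_cont by blast
  define S where "S = {a<..b} - N1"
  have N1l: "N1 \<in> sets lebesgue" using N1 by auto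
  have Sl: "S \<in> sets lebesgue" unfolding S_def using N1l by auto
  have GSl: "G \<inter> S \<in> lmeasurable"
  proof (rule fmeasurableI2[of "{a..b}"])
    show "{a..b} \<in> lmeasurable" by simp
    show "G \<inter> S \<subseteq> {a..b}" by (auto simp: S_def)
  qed (use Gl Sl in auto)
  have der: "(s has_field_derivative indicator G x) (at x within S)" if "x \<in> S" for x
  proof -
    have "x \<notin> N1" using that by (auto simp: S_def)
    then have "(s has_real_derivative 0) (at x) \<or> (s has_real_derivative 1) (at x)" by (rule dz)
    then have "(s has_real_derivative indicator G x) (at x)"
      by (auto simp: G_def indicator_def)
    then show ?thesis by (rule has_field_derivative_at_within)
  qed
  have inj: "inj_on s S" using sm strict_mono_imp_inj_on by blast
  have eqf: "(\<lambda>x. \<bar>indicator G x\<bar> *\<^sub>R (\<lambda>_. 1::real) (s x)) = indicat_real G"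
    by (auto simp: indicator_def)
  have L: "(\<lambda>x. \<bar>indicator G x\<bar> *\<^sub>R (\<lambda>_. 1::real) (s x)) absolutely_integrable_on S \<and>
       integral S (\<lambda>x. \<bar>indicator G x\<bar> *\<^sub>R (\<lambda>_. 1::real) (s x)) = measure lebesgue (G \<inter> S)"
    unfolding eqf
  proof
    show "indicat_real G absolutely_integrable_on S"
      using GSl by (subst absolutely_integrable_on_iff_nonneg) (auto simp: integrable_on_indicator)
    show "integral S (indicat_real G) = measure lebesgue (G \<inter> S)"
      using GSl by (rule integral_indicator)
  qed
  have R: "(\<lambda>_. 1::real) absolutely_integrable_on s ` S \<and> integral (s ` S) (\<lambda>_. 1::real) = measure lebesgue (G \<inter> S)"
    using has_absolute_integral_change_of_variables_real[OF Sl der inj, of "\<lambda>_. 1::real"] L by blast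
  then have sSl: "s ` S \<in> lmeasurable"
    by (simp add: lmeasurable_iff_integrable_on absolutely_integrable_on_def)
  have m1: "measure lebesgue (s ` S) = measure lebesgue (G \<inter> S)"
    using R lmeasure_integral[OF sSl] by simp
  have negN: "negligible (s ` N1)" using luzin_N[OF ac mono] N1 negligible_iff_null_sets by blast
  have img: "s ` {a<..b} = {s a<..s b}" by (rule image_Ioc_cont[OF sm c ab])
  have m2: "measure lebesgue {s a<..s b} = measure lebesgue (s ` S)"
  proof (rule measure_negligible_symdiff[OF sSl])
    show "negligible (s ` S - {s a<..s b} \<union> ({s a<..s b} - s ` S))"
    proof (rule negligible_subset[OF negN])
      show "s ` S - {s a<..s b} \<union> ({s a<..s b} - s ` S) \<subseteq> s ` N1"
        unfolding img[symmetric] S_def by auto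
    qed
  qed
  have m3: "measure lebesgue (G \<inter> {a<..b}) = measure lebesgue (G \<inter> S)"
  proof (rule measure_negligible_symdiff[OF GSl])
    show "negligible (G \<inter> S - G \<inter> {a<..b} \<union> (G \<inter> {a<..b} - G \<inter> S))"
      by (rule negligible_subset[of N1]) (use N1 negligible_iff_null_sets in \<open>auto simp: S_def\<close>)
  qed
  have "measure lebesgue {s a<..s b} = s b - s a"
    using mono ab by (simp add: mono_def)
  then show ?thesis using m1 m2 m3 by simp
qed

lemma interval_measure_eq_density:
  fixes s :: "real \<Rightarrow> real" and G :: "real set"
  assumes mono: "mono s" and c: "\<And>x. isCont s x"
    and inc: "\<And>a b. a \<le> b \<Longrightarrow> s b - s a = measure lebesgue (G \<inter> {a<..b})"
    and Gb: "G \<in> sets borel"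
  shows "interval_measure s = density lborel (indicator G)"
proof -
  define E where "E = range (\<lambda>(a, b). {a<..b::real})"
  have sE: "sets borel = sigma_sets UNIV E"
    unfolding E_def by (subst borel_sigma_sets_Ioc) (simp add: sets_measure_of)
  have eqI: "emeasure (interval_measure s) {a<..b} = emeasure (density lborel (indicator G)) {a<..b}" for a b :: real
  proof (cases "a \<le> b")
    case True
    have "emeasure (interval_measure s) {a<..b} = ennreal (s b - s a)"
      by (rule emeasure_interval_measure_Ioc[OF True])
         (use mono c in \<open>auto simp: mono_def intro: continuous_at_imp_continuous_at_within\<close>)
    also have "\<dots> = ennreal (measure lebesgue (G \<inter> {a<..b}))" using inc True by simp
    also have "\<dots> = emeasure lborel (G \<inter> {a<..b})"
    proof -
      have "emeasure lborel (G \<inter> {a<..b}) \<le> emeasure lborel {a<..b}"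
        by (rule emeasure_mono) auto
      then have fin: "emeasure lborel (G \<inter> {a<..b}) \<noteq> \<infinity>" using True
        by (auto simp: top_unique)
      have "measure lebesgue (G \<inter> {a<..b}) = measure lborel (G \<inter> {a<..b})"
        using Gb by simp
      then show ?thesis using fin by (simp add: emeasure_eq_ennreal_measure)
    qed
    also have "\<dots> = emeasure (density lborel (indicator G)) {a<..b}"
    proof -
      have "emeasure (density lborel (indicator G)) {a<..b} = (\<integral>\<^sup>+ x. indicator G x * indicator {a<..b} x \<partial>lborel)"
        using Gb by (intro emeasure_density) auto
      also have "\<dots> = (\<integral>\<^sup>+ x. indicator (G \<inter> {a<..b}) x \<partial>lborel)"
        by (rule nn_integral_cong) (simp add: indicator_inter_arith)
      also have "\<dots> = emeasure lborel (G \<inter> {a<..b})"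
        using Gb by (intro nn_integral_indicator) auto
      finally show ?thesis by simp
    qed
    finally show ?thesis .
  next
    case False
    then show ?thesis by simp
  qed
  show ?thesis
  proof (rule measure_eqI_generator_eq[where \<Omega>=UNIV and E=E and A="\<lambda>i. {- real i<..real i}"])
    show "Int_stable E"
    proof (rule Int_stableI)
      fix X Y assume "X \<in> E" "Y \<in> E"
      then obtain a b c d where "X = {a<..b}" "Y = {c<..d}" by (auto simp: E_def)
      then have "X \<inter> Y = {max a c<..min b d}" by auto
      then show "X \<inter> Y \<in> E" by (auto simp: E_def)
    qed
    show "E \<subseteq> Pow UNIV" by simp
    show "\<And>X. X \<in> E \<Longrightarrow> emeasure (interval_measure s) X = emeasure (density lborel (indicator G)) X"
      using eqI by (auto simp: E_def)
    show "sets (interval_measure s) = sigma_sets UNIV E" using sE by simp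
    show "sets (density lborel (indicator G)) = sigma_sets UNIV E" using sE by simp
    show "range (\<lambda>i. {- real i<..real i}) \<subseteq> E" by (auto simp: E_def)
    show "(\<Union>i. {- real i<..real i}) = UNIV"
    proof (auto)
      fix x :: real
      obtain n where "\<bar>x\<bar> < real n" using reals_Archimedean2 by blast
      then show "\<exists>n. - real n < x \<and> x \<le> real n" by (intro exI[of _ n]) (simp add: abs_less_iff)
    qed
    show "emeasure (interval_measure s) {- real i<..real i} \<noteq> \<infinity>" for i
      using mono c by (subst emeasure_interval_measure_Ioc)
         (auto simp: mono_def intro: continuous_at_imp_continuous_at_within)
  qed
qed

lemma deriv_zero_from_density:
  fixes w :: "real \<Rightarrow> real" and M :: "real measure"
  assumes sM: "sets M = sets borel"
    and bnd: "\<And>x y. x \<le> y \<Longrightarrow> ennreal \<bar>w y - w x\<bar> \<le> emeasure M {x<..y}"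
    and dens: "\<And>k::nat. \<exists>d>0. \<forall>h. 0 < h \<and> h < d \<longrightarrow> emeasure M (ball x h) \<le> ennreal (2 * (1 / Suc k) * h)"
  shows "(w has_real_derivative 0) (at x)"
  unfolding DERIV_def
proof (rule LIM_I)
  fix r :: real assume r: "r > 0"
  obtain k0 :: nat where k0: "4 / r < real k0" using reals_Archimedean2 by blast
  define k where "k = k0"
  have k: "4 / r < real (Suc k)" using k0 by (simp add: k_def)
  define t where "t = 1 / real (Suc k)"
  have t: "t > 0" "4 * t < r"
  proof -
    show "t > 0" by (simp add: t_def)
    have "4 < r * Suc k" using k r by (simp add: divide_less_eq mult.commute)
    then show "4 * t < r" using r by (simp add: t_def field_simps)
  qed
  obtain d where d: "d > 0" and D: "\<And>h. 0 < h \<Longrightarrow> h < d \<Longrightarrow> emeasure M (ball x h) \<le> ennreal (2 * t * h)"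
    using dens[of k] unfolding t_def by auto
  have key: "\<bar>w q - w p\<bar> \<le> 4 * t * (q - p)" if pq: "p < q" "x \<in> {p..q}" "q - p < d/2" for p q
  proof -
    define h where "h = 2 * (q - p)"
    have h: "0 < h" "h < d" using pq by (auto simp: h_def)
    have "ennreal \<bar>w q - w p\<bar> \<le> emeasure M {p<..q}" by (rule bnd) (use pq in simp)
    also have "\<dots> \<le> emeasure M (ball x h)"
    proof (rule emeasure_mono)
      show "{p<..q} \<subseteq> ball x h" using pq by (auto simp: h_def dist_real_def)
      show "ball x h \<in> sets M" using sM by simp
    qed
    also have "\<dots> \<le> ennreal (2 * t * h)" by (rule D[OF h])
    finally have "ennreal \<bar>w q - w p\<bar> \<le> ennreal (2 * t * h)" .
    then have "\<bar>w q - w p\<bar> \<le> 2 * t * h" using t h by (simp add: ennreal_le_iff)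
    then show ?thesis by (simp add: h_def algebra_simps)
  qed
  show "\<exists>e>0. \<forall>h. h \<noteq> 0 \<and> norm (h - 0) < e \<longrightarrow> norm ((w (x + h) - w x) / h - 0) < r"
  proof (intro exI[of _ "d/2"] conjI allI impI)
    show "d/2 > 0" using d by simp
    fix h :: real assume h: "h \<noteq> 0 \<and> norm (h - 0) < d/2"
    have "\<bar>w (x + h) - w x\<bar> \<le> 4 * t * \<bar>h\<bar>"
    proof (cases "h > 0")
      case True
      have "\<bar>w (x + h) - w x\<bar> \<le> 4 * t * ((x + h) - x)" by (rule key) (use h True in auto)
      then show ?thesis using True by simp
    next
      case False
      then have "h < 0" using h by auto
      have "\<bar>w x - w (x + h)\<bar> \<le> 4 * t * (x - (x + h))" by (rule key) (use h \<open>h < 0\<close> in auto)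
      then show ?thesis using \<open>h < 0\<close> by (simp add: abs_minus_commute)
    qed
    also have "\<dots> < r * \<bar>h\<bar>" using t h by (intro mult_strict_right_mono) auto
    finally have "\<bar>w (x + h) - w x\<bar> < r * \<bar>h\<bar>" .
    then show "norm ((w (x + h) - w x) / h - 0) < r"
      using h by (simp add: abs_divide divide_less_eq)
  qed
qed

lemma vitali_cover_small:
  fixes M :: "real measure" and A U :: "real set" and t e :: real
  assumes sM: "sets M = sets borel" and t: "t > 0" and e: "e > 0"
    and AU: "A \<subseteq> U" and oU: "open U" and bU: "bounded U"
    and MU: "emeasure M U < ennreal (e * t)"
    and Ap: "\<And>x d. x \<in> A \<Longrightarrow> d > 0 \<Longrightarrow> \<exists>h. 0 < h \<and> h < d \<and> ennreal (2 * t * h) < emeasure M (ball x h)"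
  shows "\<exists>T. A \<subseteq> T \<and> T \<in> lmeasurable \<and> measure lebesgue T \<le> e"
proof -
  define K where "K = {(y, h). y \<in> A \<and> 0 < h \<and> ball y h \<subseteq> U \<and> ennreal (2 * t * h) < emeasure M (ball y h)}"
  have cov: "\<exists>i. i \<in> K \<and> x \<in> ball (fst i) (snd i) \<and> snd i < d" if x: "x \<in> A" and d: "0 < d" for x d
  proof -
    obtain r where r: "r > 0" "ball x r \<subseteq> U" using x AU oU open_contains_ball by blast
    obtain h where h: "0 < h" "h < min d r" "ennreal (2 * t * h) < emeasure M (ball x h)"
      using Ap[OF x, of "min d r"] d r by auto
    have "ball x h \<subseteq> U" proof -
      have "ball x h \<subseteq> ball x r" using h by (intro subset_ball) auto
      then show ?thesis using r by blast
    qed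
    then have "(x, h) \<in> K" using x h by (auto simp: K_def)
    then show ?thesis using h by (intro exI[of _ "(x, h)"]) auto
  qed
  obtain C where C: "countable C" "C \<subseteq> K"
    and pw: "pairwise (\<lambda>i j. disjnt (ball (fst i) (snd i)) (ball (fst j) (snd j))) C"
    and neg: "negligible (A - (\<Union>i\<in>C. ball (fst i) (snd i)))"
    by (rule Vitali_covering_theorem_balls[of A K fst snd, OF cov])
  define B where "B i = ball (fst i) (snd i)" for i :: "real \<times> real"
  define Y where "Y = (\<Union>i\<in>C. B i)"
  have BU: "B i \<subseteq> U" if "i \<in> C" for i
  proof -
    obtain y h where i: "i = (y, h)" by (cases i)
    have "i \<in> K" using that C by blast
    then show ?thesis by (simp add: K_def B_def i)
  qed
  have YU: "Y \<subseteq> U" using BU by (auto simp: Y_def)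
  have oY: "open Y" by (auto simp: Y_def B_def)
  have bY: "bounded Y" using YU bU bounded_subset by blast
  have Yl: "Y \<in> lmeasurable" using oY bY lmeasurable_open by blast
  have disj: "disjoint_family_on B C"
    using pw unfolding disjoint_family_on_def pairwise_def disjnt_def B_def by blast
  have Bm: "B i \<in> sets M" "B i \<in> sets lborel" for i using sM by (auto simp: B_def)
  have eqL: "emeasure lborel Y = (\<integral>\<^sup>+i. emeasure lborel (B i) \<partial>count_space C)"
    unfolding Y_def by (rule emeasure_UN_countable) (use C disj Bm in auto)
  have eqM: "emeasure M Y = (\<integral>\<^sup>+i. emeasure M (B i) \<partial>count_space C)"
    unfolding Y_def by (rule emeasure_UN_countable) (use C disj Bm in auto)
  have pt: "ennreal t * emeasure lborel (B i) \<le> emeasure M (B i)" if "i \<in> C" for i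
  proof -
    obtain y h where i: "i = (y, h)" by (cases i)
    have h: "0 < h" "ennreal (2 * t * h) < emeasure M (ball y h)" using that C i by (auto simp: K_def)
    have "emeasure lborel (B i) = ennreal (2 * h)"
      using h by (simp add: B_def i ball_eq_greaterThanLessThan)
    then have "ennreal t * emeasure lborel (B i) = ennreal (2 * t * h)"
      using t h by (simp add: ennreal_mult[symmetric] algebra_simps)
    then show ?thesis using h by (simp add: B_def i)
  qed
  have "ennreal t * emeasure lborel Y = (\<integral>\<^sup>+i. ennreal t * emeasure lborel (B i) \<partial>count_space C)"
    unfolding eqL by (rule nn_integral_cmult[symmetric]) simp
  also have "\<dots> \<le> (\<integral>\<^sup>+i. emeasure M (B i) \<partial>count_space C)"
    by (rule nn_integral_mono) (use pt in simp)
  also have "\<dots> = emeasure M Y" using eqM by simp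
  also have "\<dots> \<le> emeasure M U" by (rule emeasure_mono[OF YU]) (use sM oU in auto)
  also have "\<dots> < ennreal (e * t)" by (rule MU)
  finally have lt: "ennreal t * emeasure lborel Y < ennreal (e * t)" .
  have "emeasure lborel Y = emeasure lebesgue Y" using oY by (simp add: borel_open)
  also have "\<dots> = ennreal (measure lebesgue Y)" by (rule emeasure_eq_measure2[OF Yl])
  finally have Ymeas: "emeasure lborel Y = ennreal (measure lebesgue Y)" .
  have "ennreal t * emeasure lborel Y = ennreal (t * measure lebesgue Y)"
    unfolding Ymeas using t by (simp add: ennreal_mult)
  then have "ennreal (t * measure lebesgue Y) < ennreal (e * t)" using lt by simp
  then have "t * measure lebesgue Y < e * t"
    using t by (subst (asm) ennreal_less_iff) (auto simp: less_imp_le)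
  then have mY: "measure lebesgue Y \<le> e" using t by (simp add: mult.commute)
  define T where "T = (A - Y) \<union> Y"
  have negAY: "negligible (A - Y)" using neg by (simp add: Y_def B_def)
  have Tl: "T \<in> lmeasurable" unfolding T_def
    using negligible_imp_measurable[OF negAY] Yl by (rule fmeasurable.Un)
  have "measure lebesgue T \<le> measure lebesgue (A - Y) + measure lebesgue Y"
    unfolding T_def by (rule measure_Un_le) (use negligible_imp_sets[OF negAY] Yl in auto)
  also have "measure lebesgue (A - Y) = 0" using negAY negligible_imp_measure0 by blast
  finally have "measure lebesgue T \<le> e" using mY by simp
  moreover have "A \<subseteq> T" by (auto simp: T_def)
  ultimately show ?thesis using Tl by blast
qed

lemma deriv_zero_ae:
  fixes w :: "real \<Rightarrow> real" and M :: "real measure" and F :: "real set"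
  assumes sM: "sets M = sets borel" and Fb: "F \<in> sets borel" and MF: "emeasure M F = 0"
    and fin: "\<And>a b. emeasure M {a<..b} < \<infinity>"
    and bnd: "\<And>x y. x \<le> y \<Longrightarrow> ennreal \<bar>w y - w x\<bar> \<le> emeasure M {x<..y}"
  shows "AE x in lebesgue. x \<in> F \<longrightarrow> (w has_real_derivative 0) (at x)"
proof -
  define W where "W n = {- real n<..<real n}" for n :: nat
  define A where "A n k = {x \<in> F \<inter> W n. \<forall>d>0. \<exists>h. 0 < h \<and> h < d \<and>
      ennreal (2 * (1 / Suc k) * h) < emeasure M (ball x h)}" for n k :: nat
  have Mm: "X \<in> sets M" if "X \<in> sets borel" for X using that sM by simp
  have negA: "negligible (A n k)" for n k
    unfolding negligible_outer_le
  proof (intro allI impI)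
    fix e :: real assume e: "e > 0"
    define t :: real where "t = 1 / Suc k"
    have t: "t > 0" by (simp add: t_def)
    define M' where "M' = density M (indicator (W n))"
    have Wb: "W n \<in> sets borel" by (simp add: W_def)
    have sM': "sets M' = sets borel" using sM by (simp add: M'_def)
    have eM': "emeasure M' X = emeasure M (W n \<inter> X)" if "X \<in> sets borel" for X
    proof -
      have "emeasure M' X = (\<integral>\<^sup>+ x. indicator (W n) x * indicator X x \<partial>M)"
        unfolding M'_def using that Wb sM by (intro emeasure_density) auto
      also have "\<dots> = (\<integral>\<^sup>+ x. indicator (W n \<inter> X) x \<partial>M)"
        by (rule nn_integral_cong) (simp add: indicator_inter_arith)
      also have "\<dots> = emeasure M (W n \<inter> X)"
        using that Wb sM by (intro nn_integral_indicator) auto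
      finally show ?thesis .
    qed
    have finM': "emeasure M' (space M') \<noteq> \<infinity>"
    proof -
      have "space M' = UNIV" using sM' sets_eq_imp_space_eq by fastforce
      then have "emeasure M' (space M') = emeasure M (W n)" using eM'[of UNIV] by simp
      also have "\<dots> \<le> emeasure M {- real n<..real n}"
        by (rule emeasure_mono) (auto simp: W_def sM)
      also have "\<dots> < \<infinity>" by (rule fin)
      finally show ?thesis by simp
    qed
    define B where "B = F \<inter> W n"
    have Bb: "B \<in> sets borel" using Fb Wb by (simp add: B_def)
    have "emeasure M' B = emeasure M (W n \<inter> B)" by (rule eM'[OF Bb])
    also have "\<dots> \<le> emeasure M F" by (rule emeasure_mono) (use Fb sM in \<open>auto simp: B_def\<close>)
    finally have MB: "emeasure M' B = 0" using MF by simp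
    have "(INF U \<in> {U. B \<subseteq> U \<and> open U}. emeasure M' U) = 0"
      using outer_regular[OF sM' finM' Bb] MB by simp
    then have "(INF U \<in> {U. B \<subseteq> U \<and> open U}. emeasure M' U) < ennreal (e * t)"
      using e t by simp
    then obtain U where U: "B \<subseteq> U" "open U" "emeasure M' U < ennreal (e * t)"
      unfolding INF_less_iff by blast
    define U' where "U' = U \<inter> W n"
    have oU': "open U'" using U by (simp add: U'_def W_def open_Int)
    have bU': "bounded U'" unfolding U'_def W_def
      by (rule bounded_subset[of "{- real n<..<real n}"]) auto
    have MU': "emeasure M U' < ennreal (e * t)"
    proof -
      have "emeasure M U' = emeasure M' U" using eM'[of U] U by (simp add: U'_def borel_open Int_commute)
      then show ?thesis using U by simp
    qed
    have AU': "A n k \<subseteq> U'" using U by (auto simp: A_def U'_def B_def)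
    show "\<exists>T. A n k \<subseteq> T \<and> T \<in> lmeasurable \<and> measure lebesgue T \<le> e"
    proof (rule vitali_cover_small[OF sM t e AU' oU' bU' MU'])
      fix x d :: real assume "x \<in> A n k" "0 < d"
      then show "\<exists>h. 0 < h \<and> h < d \<and> ennreal (2 * t * h) < emeasure M (ball x h)"
        unfolding A_def t_def by blast
    qed
  qed
  have negU: "negligible (\<Union>(range (\<lambda>(n, k). A n k)))"
    by (rule negligible_countable_Union) (use negA in auto)
  show ?thesis
  proof (rule AE_I')
    show "(\<Union>(range (\<lambda>(n, k). A n k))) \<in> null_sets lebesgue"
      using negU negligible_iff_null_sets by blast
    show "{x \<in> space lebesgue. \<not> (x \<in> F \<longrightarrow> (w has_real_derivative 0) (at x))} \<subseteq> \<Union>(range (\<lambda>(n, k). A n k))"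
    proof (rule subsetI, rule ccontr)
      fix x assume x: "x \<in> {x \<in> space lebesgue. \<not> (x \<in> F \<longrightarrow> (w has_real_derivative 0) (at x))}"
        and nx: "x \<notin> \<Union>(range (\<lambda>(n, k). A n k))"
      obtain n :: nat where n: "\<bar>x\<bar> < real n" using reals_Archimedean2 by blast
      have xW: "x \<in> F \<inter> W n" using x n by (auto simp: W_def abs_less_iff)
      have D: "\<exists>d>0. \<forall>h. 0 < h \<and> h < d \<longrightarrow> emeasure M (ball x h) \<le> ennreal (2 * (1 / Suc k) * h)" for k
      proof -
        have "x \<notin> A n k" using nx by blast
        then show ?thesis using xW unfolding A_def by (auto simp: not_less) (meson not_le)
      qed
      have "(w has_real_derivative 0) (at x)"
        using deriv_zero_from_density[of M w x, OF sM bnd D] by simp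
      then show False using x by simp
    qed
  qed
qed

theorem mainTheorem9:
  fixes s u u1 u2 :: "real \<Rightarrow> real" and G F :: "real set"
  assumes s_mono: "strict_mono s"
    and s_ac: "abs_cont s"
    and s_deriv: "AE x in lebesgue. (s has_real_derivative 0) (at x) \<or> (s has_real_derivative 1) (at x)"
    and G_def: "G = {x. (s has_real_derivative 1) (at x)}"
    and F_def: "F = - G"
    and G_open: "open G"
    and F_pos: "emeasure lebesgue F > 0"
    and F_perfect: "\<forall>x\<in>F. x islimpt F"
    and u: "u \<in> Fe"
    and u1: "u1 \<in> Fse s"
    and u2: "u2 \<in> Gs s"
    and decomp: "u = (\<lambda>x. u1 x + u2 x)"
  shows "AE x in lebesgue. x \<in> F \<longrightarrow> deriv u x = deriv u2 x"
proof -
  have mono: "mono s" using s_mono by (simp add: strict_mono_mono)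
  have c: "\<And>x. isCont s x" using s_ac abs_cont_cont by blast
  obtain N1 where N1: "N1 \<in> null_sets lebesgue"
    and dz: "\<And>x. x \<in> space lebesgue - N1 \<Longrightarrow> (s has_real_derivative 0) (at x) \<or> (s has_real_derivative 1) (at x)"
    using AE_E3[OF s_deriv] by blast
  have Gb: "G \<in> sets borel" using G_open by (simp add: borel_open)
  have Gl: "G \<in> sets lebesgue" using Gb by simp
  have inc: "\<And>a b. a \<le> b \<Longrightarrow> s b - s a = measure lebesgue (G \<inter> {a<..b})"
    by (rule s_increment[OF s_ac s_mono N1 _ G_def Gl]) (use dz in auto)
  have mu: "interval_measure s = density lborel (indicator G)"
    by (rule interval_measure_eq_density[OF mono c inc Gb])
  have "\<exists>f. ds_density s u1 f" using u1 unfolding Fse_def mem_Collect_eq by (elim conjE exE) (rule exI)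
  then obtain f where dsd: "ds_density s u1 f" by (elim exE)
  have fm: "f \<in> borel_measurable borel"
    and fi: "\<And>a b. a \<le> b \<Longrightarrow> set_integrable (interval_measure s) {a<..b} f"
    and fe: "\<And>a b. a \<le> b \<Longrightarrow> u1 b - u1 a = (LINT x:{a<..b}|interval_measure s. f x)"
    using dsd unfolding ds_density_def by blast+
  define \<mu> where "\<mu> = interval_measure s"
  define M where "M = density \<mu> (\<lambda>x. ennreal \<bar>f x\<bar>)"
  have sMu: "sets \<mu> = sets borel" by (simp add: \<mu>_def)
  have sM: "sets M = sets borel" by (simp add: M_def \<mu>_def)
  have fmu: "f \<in> borel_measurable \<mu>" using fm sMu measurable_cong_sets by blast
  have eM: "emeasure M X = (\<integral>\<^sup>+ x. ennreal (norm (indicator X x *\<^sub>R f x)) \<partial>\<mu>)" if "X \<in> sets borel" for X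
  proof -
    have "emeasure M X = (\<integral>\<^sup>+ x. ennreal \<bar>f x\<bar> * indicator X x \<partial>\<mu>)"
      unfolding M_def using that sMu fmu by (intro emeasure_density) auto
    also have "\<dots> = (\<integral>\<^sup>+ x. ennreal (norm (indicator X x *\<^sub>R f x)) \<partial>\<mu>)"
      by (rule nn_integral_cong) (auto simp: indicator_def)
    finally show ?thesis .
  qed
  have Fb: "F \<in> sets borel" using Gb by (simp add: F_def)
  have MF: "emeasure M F = 0"
  proof -
    have "emeasure M F = (\<integral>\<^sup>+ x. ennreal (norm (indicator F x *\<^sub>R f x)) \<partial>density lborel (indicator G))"
      using eM[OF Fb] by (simp add: \<mu>_def mu)
    also have "\<dots> = (\<integral>\<^sup>+ x. indicator G x * ennreal (norm (indicator F x *\<^sub>R f x)) \<partial>lborel)"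
      using Gb Fb fm by (intro nn_integral_density) auto
    also have "\<dots> = 0"
    proof -
      have "(\<lambda>x. indicator G x * ennreal (norm (indicat_real F x *\<^sub>R f x))) = (\<lambda>x. 0)"
        by (rule ext) (auto simp: indicator_def F_def)
      then show ?thesis by (simp only:) simp
    qed
    finally show ?thesis .
  qed
  have fin: "emeasure M {a<..b} < \<infinity>" for a b
  proof (cases "a \<le> b")
    case True
    have "integrable \<mu> (\<lambda>x. indicator {a<..b} x *\<^sub>R f x)"
      using fi[OF True] unfolding set_integrable_def \<mu>_def by simp
    then have "(\<integral>\<^sup>+ x. ennreal (norm (indicator {a<..b} x *\<^sub>R f x)) \<partial>\<mu>) < \<infinity>"
      unfolding integrable_iff_bounded by blast
    then show ?thesis using eM[of "{a<..b}"] by simp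
  next
    case False
    then show ?thesis by simp
  qed
  have bnd: "ennreal \<bar>u1 y - u1 x\<bar> \<le> emeasure M {x<..y}" if xy: "x \<le> y" for x y
  proof -
    have int: "integrable \<mu> (\<lambda>z. indicator {x<..y} z *\<^sub>R f z)"
      using fi[OF xy] unfolding set_integrable_def \<mu>_def by simp
    have "u1 y - u1 x = integral\<^sup>L \<mu> (\<lambda>z. indicator {x<..y} z *\<^sub>R f z)"
      using fe[OF xy] unfolding set_lebesgue_integral_def \<mu>_def by simp
    then have "ennreal \<bar>u1 y - u1 x\<bar> = ennreal (norm (integral\<^sup>L \<mu> (\<lambda>z. indicator {x<..y} z *\<^sub>R f z)))"
      by simp
    also have "\<dots> \<le> (\<integral>\<^sup>+ z. ennreal (norm (indicator {x<..y} z *\<^sub>R f z)) \<partial>\<mu>)"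
      using integral_norm_bound_ennreal[OF int] by simp
    also have "\<dots> = emeasure M {x<..y}" using eM[of "{x<..y}"] by simp
    finally show ?thesis .
  qed
  have ae: "AE x in lebesgue. x \<in> F \<longrightarrow> (u1 has_real_derivative 0) (at x)"
    by (rule deriv_zero_ae[OF sM Fb MF fin bnd])
  show ?thesis
  proof (rule AE_mp[OF ae], rule AE_I2, intro impI)
    fix x assume d1: "x \<in> F \<longrightarrow> (u1 has_real_derivative 0) (at x)" and xF: "x \<in> F"
    then have d1: "(u1 has_real_derivative 0) (at x)" by blast
    have eqv: "(u has_real_derivative D) (at x) \<longleftrightarrow> (u2 has_real_derivative D) (at x)" for D
    proof
      assume "(u has_real_derivative D) (at x)"
      then have "((\<lambda>x. u x - u1 x) has_real_derivative D - 0) (at x)"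
        using d1 by (intro DERIV_diff)
      moreover have "(\<lambda>x. u x - u1 x) = u2" using decomp by auto
      ultimately show "(u2 has_real_derivative D) (at x)" by simp
    next
      assume "(u2 has_real_derivative D) (at x)"
      then have "((\<lambda>x. u1 x + u2 x) has_real_derivative 0 + D) (at x)"
        using d1 by (intro DERIV_add)
      then show "(u has_real_derivative D) (at x)" using decomp by simp
    qed
    have "(\<lambda>D. (u has_real_derivative D) (at x)) = (\<lambda>D. (u2 has_real_derivative D) (at x))"
      by (rule ext) (rule eqv)
    then show "deriv u x = deriv u2 x"
      unfolding deriv_def by (simp only:)
  qed
qed

end
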